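(* For every positive integer $n$, the map $\Psi_{\mathrm{PF}\to\mathrm{Luk}}:\mathrm{PF}_n^{\mathrm{inc}}\to\mathrm{Luk}_n$ is a bijection. Moreover, for every $p\in\mathrm{PF}_n^{\mathrm{inc}}$ we have $|\mathrm{disp}(p)|=\mathrm{Area}(\Psi_{\mathrm{PF}\to\mathrm{Luk}}(p))$ and $\max(\mathrm{disp}(p))=\mathrm{Height}(\Psi_{\mathrm{PF}\to\mathrm{Luk}}(p))$.
   Context: Let $n\ge 1$ and $[n]=\{1,\dots,n\}$. A parking preference is $p=(p_1,\dots,p_n)\in[n]^n$. Cars $1,\dots,n$ enter a one-way car park with spots $1,\dots,n$ in order; car $i$ parks in the first unoccupied spot $k\ge p_i$, and fails to park if there is none. $p$ is a parking function if all cars park; $\mathrm{PF}_n$ denotes the set of parking functions, and $\mathrm{PF}_n^{\mathrm{inc}}$ the set of those with $p_1\le p_2\le\dots\le p_n$. If car $i$ parks in spot $o_i$, its displacement is $d_i=o_i-p_i$; $\mathrm{disp}(p)=(d_1,\dots,d_n)$, $|\mathrm{disp}(p)|=\sum_i d_i$, and $\max(\mathrm{disp}(p))=\max_i d_i$. A Łukasiewicz word of length $n$ is a sequence $\ell=(\ell_1,\dots,\ell_n)$ of integers $\ell_i\ge -1$ with $\sum_{i=1}^k\ell_i\ge 0$ for all $k\in[n]$ and $\sum_{i=1}^n\ell_i=0$; $\mathrm{Luk}_n$ is the set of these. It is identified with the lattice path from $(0,0)$ whose $i$-th step is the vector $(\ell_i+1,\ell_i)$ (it ends at $(n,0)$ and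 never goes below the $x$-axis). Write $h(\ell;j)=\sum_{i=1}^j\ell_i$ ($h(\ell;0)=0$). $\mathrm{Height}(\ell)$ is the largest $y$-coordinate reached by the path, i.e. $\max_j h(\ell;j)$. $\mathrm{Area}(\ell)$ is the area between the path and the $x$-axis; equivalently, $\mathrm{Area}(\ell)=\sum_{j=1}^n \frac{(\ell_j+1)(2h(\ell;j-1)+\ell_j)}{2}$. The map $\Psi_{\mathrm{PF}\to\mathrm{Luk}}$ sends $p\in\mathrm{PF}_n$ to $\ell=(\ell_1,\dots,\ell_n)$ with $\ell_i=|\{j\in[n]: p_j=i\}|-1$. *)

theory Defs
  imports Complex_Main
begin

(* Preferences are lists: car i (1-based) has preference p ! (i-1). Spots are 1-based. *)

(* Parking process: each car takes the least spot k \<ge> its preference not yet occupied.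
   If no spot \<le> n is free the returned spot is > n (i.e. the car fails). *)
fun park_spots_aux :: "nat set \<Rightarrow> nat list \<Rightarrow> nat list" where
  "park_spots_aux S [] = []"
| "park_spots_aux S (a # as) =
     (let k = (LEAST k. a \<le> k \<and> k \<notin> S) in k # park_spots_aux (insert k S) as)"

definition park_spots :: "nat list \<Rightarrow> nat list" where
  "park_spots p = park_spots_aux {} p"

definition PF :: "nat \<Rightarrow> nat list set" where
  "PF n = {p. length p = n \<and> set p \<subseteq> {1..n} \<and> set (park_spots p) \<subseteq> {1..n}}"

definition PF_inc :: "nat \<Rightarrow> nat list set" where
  "PF_inc n = {p \<in> PF n. sorted p}"

definition disp :: "nat list \<Rightarrow> nat list" where
  "disp p = map2 (\<lambda>s a. s - a) (park_spots p) p"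

definition Luk :: "nat \<Rightarrow> int list set" where
  "Luk n = {l. length l = n \<and> (\<forall>x\<in>set l. x \<ge> -1)
              \<and> (\<forall>k\<in>{1..n}. sum_list (take k l) \<ge> 0) \<and> sum_list l = 0}"

definition hgt :: "int list \<Rightarrow> nat \<Rightarrow> int" where
  "hgt l j = sum_list (take j l)"

definition Height :: "int list \<Rightarrow> int" where
  "Height l = Max ((hgt l) ` {0..length l})"

definition Area :: "int list \<Rightarrow> real" where
  "Area l = (\<Sum>j=1..length l.
      (of_int (l ! (j-1)) + 1) * (2 * of_int (hgt l (j-1)) + of_int (l ! (j-1))) / 2)"

definition Psi_PF_Luk :: "nat \<Rightarrow> nat list \<Rightarrow> int list" where
  "Psi_PF_Luk n p = map (\<lambda>i. int (count_list p i) - 1) [1..<n+1]"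

end

theory Submission
  imports Defs "HOL-Library.Multiset"
begin

lemma park_len: "length (park_spots_aux S as) = length as"
  by (induction as arbitrary: S) (auto simp: Let_def)

lemma least_ex: "finite S \<Longrightarrow> \<exists>k. a \<le> k \<and> k \<notin> (S::nat set)"
  by (metis finite_nat_set_iff_bounded_le le_add2 not_less_eq_eq add_Suc_right le_trans le_add1 nat_le_linear)

lemma park_distinct: "finite S \<Longrightarrow> distinct (park_spots_aux S as) \<and> set (park_spots_aux S as) \<inter> S = {}"
proof (induction as arbitrary: S)
  case Nil then show ?case by simp
next
  case (Cons a as)
  define k where "k = (LEAST k. a \<le> k \<and> k \<notin> S)"
  have "a \<le> k \<and> k \<notin> S" unfolding k_def
    by (rule LeastI_ex) (rule least_ex[OF Cons.prems])
  moreover have "distinct (park_spots_aux (insert k S) as) \<and> set (park_spots_aux (insert k S) as) \<inter> insert k S = {}"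
    using Cons by simp
  ultimately show ?case by (auto simp: Let_def k_def[symmetric])
qed

lemma park_ge: "finite S \<Longrightarrow> i < length as \<Longrightarrow> as ! i \<le> park_spots_aux S as ! i"
proof (induction as arbitrary: S i)
  case Nil then show ?case by simp
next
  case (Cons a as)
  define k where "k = (LEAST k. a \<le> k \<and> k \<notin> S)"
  have "a \<le> k \<and> k \<notin> S" unfolding k_def
    by (rule LeastI_ex) (rule least_ex[OF Cons.prems(1)])
  then show ?case using Cons by (cases i) (auto simp: Let_def k_def[symmetric])
qed

lemma park_upt: "(\<forall>i<length as. 1 \<le> as ! i \<and> as ! i \<le> m + 1 + i) \<Longrightarrow>
   park_spots_aux {1..<m+1} as = [m+1..<m+1+length as]"
proof (induction as arbitrary: m)
  case Nil then show ?case by simp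
next
  case (Cons a as)
  have a: "1 \<le> a" "a \<le> m+1" using Cons.prems[rule_format, of 0] by auto
  have k: "(LEAST k. a \<le> k \<and> k \<notin> {1..<m+1}) = m+1"
    by (rule Least_equality) (use a in auto)
  have ins: "insert (m+1) {1..<m+1} = {1..<Suc m+1}" by auto
  have "park_spots_aux {1..<Suc m+1} as = [Suc m+1..<Suc m+1+length as]"
    apply (rule Cons.IH) using Cons.prems by fastforce
  moreover have "park_spots_aux {1..<m+1} (a#as) = (m+1) # park_spots_aux {1..<Suc m+1} as"
    by (simp only: park_spots_aux.simps Let_def k ins)
  moreover have "[m+1..<m+1+length (a#as)] = (m+1) # [Suc m+1..<Suc m+1+length as]"
    by (subst upt_conv_Cons) auto
  ultimately show ?case by simp
qed

lemma PF_inc_iff: "p \<in> PF_inc n \<longleftrightarrow> sorted p \<and> length p = n \<and> (\<forall>i<n. 1 \<le> p ! i \<and> p ! i \<le> i + 1)"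
proof
  assume R: "sorted p \<and> length p = n \<and> (\<forall>i<n. 1 \<le> p ! i \<and> p ! i \<le> i + 1)"
  have ps: "park_spots p = [1..<n+1]"
    using park_upt[of p 0] R by (simp add: park_spots_def)
  have "set p \<subseteq> {1..n}"
  proof
    fix x assume "x \<in> set p"
    then obtain i where "i < n" "p ! i = x" using R by (auto simp: in_set_conv_nth)
    then show "x \<in> {1..n}" using R by force
  qed
  then show "p \<in> PF_inc n" using R ps by (auto simp: PF_inc_def PF_def)
next
  assume P: "p \<in> PF_inc n"
  then have s: "sorted p" and l: "length p = n" and sp: "set p \<subseteq> {1..n}"
    and pk: "set (park_spots p) \<subseteq> {1..n}"
    by (auto simp: PF_inc_def PF_def)
  have "p ! i \<le> i + 1" if i: "i < n" for i
  proof (rule ccontr)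
    assume "\<not> p ! i \<le> i + 1"
    define sp where "sp = park_spots p"
    have lsp: "length sp = n" using l park_len by (simp add: sp_def park_spots_def)
    have dsp: "distinct sp" using park_distinct[of "{}" p] by (simp add: sp_def park_spots_def)
    have sub: "(\<lambda>j. sp ! j) ` {i..<n} \<subseteq> {i+2..n}"
    proof
      fix y assume "y \<in> (\<lambda>j. sp ! j) ` {i..<n}"
      then obtain j where j: "i \<le> j" "j < n" "y = sp ! j" by auto
      have "p ! i \<le> p ! j" using s j l by (simp add: sorted_iff_nth_mono)
      moreover have "p ! j \<le> sp ! j" using park_ge[of "{}" j p] j l by (simp add: sp_def park_spots_def)
      moreover have "sp ! j \<in> set sp" using j lsp by simp
      ultimately show "y \<in> {i+2..n}" using j pk \<open>\<not> p ! i \<le> i + 1\<close> sp_def by auto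
    qed
    have inj: "inj_on (\<lambda>j. sp ! j) {i..<n}"
      using dsp lsp by (auto simp: inj_on_def nth_eq_iff_index_eq)
    have "card {i..<n} \<le> card {i+2..n}"
      by (rule card_inj_on_le[OF inj sub]) simp
    then show False using i by simp
  qed
  moreover have "1 \<le> p ! i" if "i < n" for i using sp that l by (auto dest!: nth_mem)
  ultimately show "sorted p \<and> length p = n \<and> (\<forall>i<n. 1 \<le> p ! i \<and> p ! i \<le> i + 1)"
    using s l by auto
qed

definition cle :: "nat list \<Rightarrow> nat \<Rightarrow> nat" where
  "cle p k = length (filter (\<lambda>x. x \<le> k) p)"

lemma cle_Suc: "cle p (Suc k) = cle p k + count_list p (Suc k)"
  unfolding cle_def by (induction p) auto

lemma cle_0: "\<forall>x\<in>set p. 1 \<le> x \<Longrightarrow> cle p 0 = 0"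
  unfolding cle_def by (induction p) auto

lemma cle_all: "\<forall>x\<in>set p. x \<le> k \<Longrightarrow> cle p k = length p"
  unfolding cle_def by (induction p) auto

lemma cle_le_len: "cle p k \<le> length p"
  unfolding cle_def by simp

lemma sle_Suc: "sum_list (filter (\<lambda>x. x \<le> Suc k) p) = sum_list (filter (\<lambda>x. x \<le> k) p) + Suc k * count_list p (Suc k)"
  by (induction p) auto

lemma nth_le_iff: assumes "sorted p" "i < length p"
  shows "p ! i \<le> k \<longleftrightarrow> i < cle p k"
proof
  assume a: "p ! i \<le> k"
  have "{0..i} \<subseteq> {j. j < length p \<and> p ! j \<le> k}"
    using assms a by (auto intro: le_trans[OF sorted_nth_mono[OF assms(1)]])
  then have "card {0..i} \<le> card {j. j < length p \<and> p ! j \<le> k}"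
    by (intro card_mono) auto
  then show "i < cle p k" by (simp add: cle_def length_filter_conv_card)
next
  assume a: "i < cle p k"
  show "p ! i \<le> k"
  proof (rule ccontr)
    assume b: "\<not> p ! i \<le> k"
    have "{j. j < length p \<and> p ! j \<le> k} \<subseteq> {0..<i}"
    proof
      fix j assume "j \<in> {j. j < length p \<and> p ! j \<le> k}"
      then have "j < length p" "p ! j \<le> k" by auto
      then show "j \<in> {0..<i}" using b assms
        by (metis atLeastLessThan_iff le_trans linorder_not_le sorted_iff_nth_mono zero_le)
    qed
    then have "card {j. j < length p \<and> p ! j \<le> k} \<le> card {0..<i}"
      by (intro card_mono) auto
    then show False using a by (simp add: cle_def length_filter_conv_card)
  qed
qed

lemma sum_count: "\<forall>x\<in>set p. 1 \<le> x \<Longrightarrow> (\<Sum>j=1..k. int (count_list p j)) = int (cle p k)"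
proof (induction k)
  case 0 then show ?case by (simp add: cle_0)
next
  case (Suc k) then show ?case by (simp add: cle_Suc)
qed

lemma Psi_nth: "i < n \<Longrightarrow> Psi_PF_Luk n p ! i = int (count_list p (Suc i)) - 1"
  by (simp add: Psi_PF_Luk_def del: upt_Suc)

lemma hgt_Psi: assumes "\<forall>x\<in>set p. 1 \<le> x" "k \<le> n"
  shows "hgt (Psi_PF_Luk n p) k = int (cle p k) - int k"
proof -
  have "take k (Psi_PF_Luk n p) = map (\<lambda>i. int (count_list p i) - 1) [1..<k+1]"
    using assms by (simp add: Psi_PF_Luk_def take_map del: upt_Suc)
  then have "hgt (Psi_PF_Luk n p) k = sum_list (map (\<lambda>i. int (count_list p i) - 1) [1..<k+1])"
    by (simp add: hgt_def del: upt_Suc)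
  also have "\<dots> = (\<Sum>j=1..<k+1. int (count_list p j) - 1)"
    by (simp only: sum_set_upt_conv_sum_list_nat[symmetric] set_upt)
  also have "\<dots> = (\<Sum>j=1..k. int (count_list p j) - 1)"
    by (simp only: Suc_eq_plus1[symmetric] atLeastLessThanSuc_atLeastAtMost)
  also have "\<dots> = int (cle p k) - int k"
    using sum_count[OF assms(1)] by (simp add: sum_subtractf)
  finally show ?thesis .
qed

lemma Psi_len[simp]: "length (Psi_PF_Luk n p) = n"
  by (simp add: Psi_PF_Luk_def)

lemma PF_inc_ge1: "p \<in> PF_inc n \<Longrightarrow> \<forall>x\<in>set p. 1 \<le> x \<and> x \<le> n"
  by (auto simp: PF_inc_def PF_def)

lemma into_Luk: assumes "p \<in> PF_inc n" shows "Psi_PF_Luk n p \<in> Luk n"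
proof -
  have s: "sorted p" and l: "length p = n" and b: "\<forall>i<n. 1 \<le> p ! i \<and> p ! i \<le> i + 1"
    using assms PF_inc_iff by auto
  have e: "\<forall>x\<in>set p. 1 \<le> x" and e2: "\<forall>x\<in>set p. x \<le> n" using PF_inc_ge1[OF assms] by auto
  have "sum_list (take k (Psi_PF_Luk n p)) \<ge> 0" if k: "k \<in> {1..n}" for k
  proof -
    have "p ! (k-1) \<le> k-1+1" using b k by (metis atLeastAtMost_iff diff_less less_le_trans zero_less_one)
    then have "p ! (k-1) \<le> k" using k by simp
    moreover have "k - 1 < length p" using k l by (simp, arith)
    ultimately have "k - 1 < cle p k" using nth_le_iff[OF s] by blast
    then show ?thesis using hgt_Psi[OF e, of k n] k by (simp add: hgt_def)
  qed
  moreover have "sum_list (Psi_PF_Luk n p) = 0"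
    using hgt_Psi[OF e, of n n] cle_all[OF e2] l by (simp add: hgt_def)
  moreover have "\<forall>x\<in>set (Psi_PF_Luk n p). x \<ge> -1"
    by (auto simp: Psi_PF_Luk_def)
  ultimately show ?thesis by (simp add: Luk_def)
qed

lemma Psi_inj: "inj_on (Psi_PF_Luk n) (PF_inc n)"
proof
  fix p q assume p: "p \<in> PF_inc n" and q: "q \<in> PF_inc n" and eq: "Psi_PF_Luk n p = Psi_PF_Luk n q"
  have "count_list p x = count_list q x" for x
  proof (cases "x \<in> {1..n}")
    case True
    then have "Psi_PF_Luk n p ! (x-1) = Psi_PF_Luk n q ! (x-1)" using eq by simp
    then show ?thesis using True Psi_nth[of "x-1" n] by auto
  next
    case False
    then have "x \<notin> set p" "x \<notin> set q" using PF_inc_ge1[OF p] PF_inc_ge1[OF q] by auto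
    then show ?thesis by (simp add: count_list_0_iff)
  qed
  then have "mset p = mset q" by (intro multiset_eqI) (simp add: count_mset)
  moreover have "sorted p" "sorted q" using p q by (auto simp: PF_inc_def)
  ultimately show "p = q" using properties_for_sort sorted_sort_id by metis
qed

lemma Psi_surj: assumes L: "l \<in> Luk n" shows "\<exists>p\<in>PF_inc n. Psi_PF_Luk n p = l"
proof -
  have ll: "length l = n" and lge: "\<forall>x\<in>set l. x \<ge> -1"
    and lps: "\<forall>k\<in>{1..n}. sum_list (take k l) \<ge> 0" and ls: "sum_list l = 0"
    using L by (auto simp: Luk_def)
  define M where "M = (\<Sum>j\<in>{1..n}. replicate_mset (nat (l!(j-1)+1)) j)"
  define p where "p = sorted_list_of_multiset M"
  have cM: "count M x = (if x \<in> {1..n} then nat (l!(x-1)+1) else 0)" for x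
    by (simp add: M_def count_sum count_replicate_mset if_distrib sum.If_cases cong: if_cong)
  have cp: "count_list p x = (if x \<in> {1..n} then nat (l!(x-1)+1) else 0)" for x
    using cM[of x] by (simp add: p_def flip: count_mset)
  have sp: "set p \<subseteq> {1..n}"
  proof
    fix x assume "x \<in> set p"
    then have "count_list p x \<noteq> 0" by (simp add: count_list_0_iff)
    then show "x \<in> {1..n}" using cp[of x] by (auto split: if_splits)
  qed
  have e: "\<forall>x\<in>set p. 1 \<le> x" and e2: "\<forall>x\<in>set p. x \<le> n" using sp by auto
  have s: "sorted p" by (simp add: p_def)
  have psi: "Psi_PF_Luk n p = l"
  proof (rule nth_equalityI)
    show "length (Psi_PF_Luk n p) = length l" using ll by simp
    fix i assume "i < length (Psi_PF_Luk n p)"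
    then have i: "i < n" by simp
    have "l ! i \<ge> -1" using lge i ll by auto
    then show "Psi_PF_Luk n p ! i = l ! i" using Psi_nth[OF i] cp[of "Suc i"] i by simp
  qed
  have lp: "length p = n"
    using hgt_Psi[OF e, of n n] cle_all[OF e2] ls psi ll by (simp add: hgt_def)
  have "p ! i \<le> i + 1" if i: "i < n" for i
  proof -
    have "hgt l (i+1) \<ge> 0" using lps i by (simp add: hgt_def)
    then have "i < cle p (i+1)" using hgt_Psi[OF e, of "i+1" n] psi i by simp
    then show ?thesis using nth_le_iff[OF s] i lp by simp
  qed
  moreover have "1 \<le> p ! i" if "i < n" for i using e that lp by auto
  ultimately have "p \<in> PF_inc n" using PF_inc_iff s lp by auto
  then show ?thesis using psi by blast
qed

lemma disp_eq: assumes "p \<in> PF_inc n" shows "disp p = map (\<lambda>i. Suc i - p ! i) [0..<n]"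
proof -
  have R: "sorted p" "length p = n" "\<forall>i<n. 1 \<le> p ! i \<and> p ! i \<le> i + 1"
    using assms PF_inc_iff by auto
  have ps: "park_spots p = [1..<n+1]"
    using park_upt[of p 0] R by (simp add: park_spots_def)
  show ?thesis
    by (rule nth_equalityI) (auto simp: disp_def ps R(2) nth_upt simp del: upt_Suc)
qed

lemma sle_0: "\<forall>x\<in>set (p::nat list). 1 \<le> x \<Longrightarrow> filter (\<lambda>x. x \<le> 0) p = []"
  by (induction p) auto

lemma area_gen: assumes e: "\<forall>x\<in>set p. 1 \<le> x"
  shows "(\<Sum>j=1..k. real (count_list p j) * (2 * (real (cle p (j-1)) - real j + 1) + real (count_list p j) - 1) / 2)
     = real (cle p k) * (real (cle p k) + 1) / 2 - real (sum_list (filter (\<lambda>x. x \<le> k) p))"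
proof (induction k)
  case 0 then show ?case using cle_0[OF e] sle_0[OF e] by simp
next
  case (Suc k)
  then show ?case by (simp add: cle_Suc sle_Suc algebra_simps add_divide_distrib diff_divide_distrib)
qed

lemma gauss_real: "(\<Sum>i<n. real (Suc i)) = real n * (real n + 1) / 2"
  by (induction n) (auto simp: field_simps)

lemma disp_sum: assumes "p \<in> PF_inc n"
  shows "real (sum_list (disp p)) = real n * (real n + 1) / 2 - real (sum_list p)"
proof -
  have R: "length p = n" "\<forall>i<n. 1 \<le> p ! i \<and> p ! i \<le> i + 1"
    using assms PF_inc_iff by auto
  have "real (sum_list (disp p)) = (\<Sum>i<n. real (Suc i - p ! i))"
    by (simp add: disp_eq[OF assms] sum_list_sum_nth atLeast0LessThan)
  also have "\<dots> = (\<Sum>i<n. real (Suc i) - real (p ! i))"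
    using R by (intro sum.cong) (auto simp: of_nat_diff)
  also have "\<dots> = real n * (real n + 1) / 2 - (\<Sum>i<n. real (p ! i))"
    by (simp only: sum_subtractf gauss_real)
  also have "(\<Sum>i<n. real (p ! i)) = real (sum_list p)"
    by (simp add: sum_list_sum_nth[of p] R(1) atLeast0LessThan)
  finally show ?thesis .
qed

lemma area_eq: assumes P: "p \<in> PF_inc n"
  shows "real (sum_list (disp p)) = Area (Psi_PF_Luk n p)"
proof -
  have e: "\<forall>x\<in>set p. 1 \<le> x" and e2: "\<forall>x\<in>set p. x \<le> n" using PF_inc_ge1[OF P] by auto
  have lp: "length p = n" using P PF_inc_iff by auto
  let ?l = "Psi_PF_Luk n p"
  have "Area ?l = (\<Sum>j=1..n. real (count_list p j) * (2 * (real (cle p (j-1)) - real j + 1) + real (count_list p j) - 1) / 2)"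
    unfolding Area_def Psi_len
  proof (intro sum.cong refl)
    fix j assume j: "j \<in> {1..n}"
    have j1: "j - 1 < n" using j by (simp, arith)
    have a: "?l ! (j-1) = int (count_list p j) - 1" using Psi_nth[OF j1, of p] j by simp
    have b: "hgt ?l (j-1) = int (cle p (j-1)) - int (j-1)" using hgt_Psi[OF e, of "j-1" n] j1 by simp
    show "(real_of_int (?l ! (j-1)) + 1) * (2 * real_of_int (hgt ?l (j-1)) + real_of_int (?l ! (j-1))) / 2
      = real (count_list p j) * (2 * (real (cle p (j-1)) - real j + 1) + real (count_list p j) - 1) / 2"
      unfolding a b using j by (simp add: of_nat_diff algebra_simps)
  qed
  also have "\<dots> = real (cle p n) * (real (cle p n) + 1) / 2 - real (sum_list (filter (\<lambda>x. x \<le> n) p))"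
    by (rule area_gen[OF e])
  also have "filter (\<lambda>x. x \<le> n) p = p" using e2 by simp
  also have "cle p n = n" using cle_all[OF e2] lp by simp
  finally show ?thesis using disp_sum[OF P] by simp
qed

lemma height_eq: assumes P: "p \<in> PF_inc n" and n: "n \<ge> 1"
  shows "int (Max (set (disp p))) = Height (Psi_PF_Luk n p)"
proof -
  have s: "sorted p" and lp: "length p = n" and b: "\<forall>i<n. 1 \<le> p ! i \<and> p ! i \<le> i + 1"
    using P PF_inc_iff by auto
  have e: "\<forall>x\<in>set p. 1 \<le> x" using PF_inc_ge1[OF P] by auto
  let ?l = "Psi_PF_Luk n p"
  define D where "D = set (disp p)"
  define H where "H = hgt ?l ` {0..n}"
  have D: "D = (\<lambda>i. Suc i - p ! i) ` {0..<n}" by (simp add: D_def disp_eq[OF P])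
  have fD: "finite D" "D \<noteq> {}" using n D by auto
  have fH: "finite H" "H \<noteq> {}" by (auto simp: H_def)
  have hj: "hgt ?l j = int (cle p j) - int j" if "j \<le> n" for j using hgt_Psi[OF e that] .
  have 1: "int (Max D) \<le> Max H"
  proof -
    have "Max D \<in> D" using fD by simp
    then obtain i where i: "i < n" "Max D = Suc i - p ! i" using D by auto
    define j where "j = p ! i"
    have "p ! i \<le> Suc i" using b i by simp
    then have jn: "j \<le> n" using i by (simp add: j_def)
    have "i < cle p j" using nth_le_iff[OF s, of i j] i lp by (simp add: j_def)
    then have "int (Max D) \<le> hgt ?l j" using i(2) hj[OF jn] b i by (simp add: j_def of_nat_diff)
    also have "hgt ?l j \<le> Max H" using fH jn by (auto simp: H_def)
    finally show ?thesis .
  qed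
  have 2: "Max H \<le> int (Max D)"
  proof -
    have "Max H \<in> H" using fH by simp
    then obtain j where j0: "j \<in> {0..n}" "Max H = hgt ?l j" unfolding H_def by blast
    then have j: "j \<le> n" "Max H = int (cle p j) - int j" using hj by auto
    show ?thesis
    proof (cases "cle p j = 0")
      case True then show ?thesis using j by simp
    next
      case False
      define i where "i = cle p j - 1"
      have i: "i < n" using cle_le_len[of p j] lp False by (simp add: i_def)
      have "p ! i \<le> j" using nth_le_iff[OF s, of i j] i lp False by (simp add: i_def)
      have "Suc i - p ! i \<in> D" using D i by auto
      then have "Suc i - p ! i \<le> Max D" using fD by simp
      then have "int (Suc i - p ! i) \<le> int (Max D)" by linarith
      moreover have "int (Suc i - p ! i) = int (cle p j) - int (p ! i)"
      proof -
        have "p ! i \<le> Suc i" using b i by simp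
        moreover have "Suc i = cle p j" using False by (simp add: i_def)
        ultimately show ?thesis by simp
      qed
      ultimately show ?thesis using j \<open>p ! i \<le> j\<close> by linarith
    qed
  qed
  have "int (Max D) = Max H" using 1 2 by (rule antisym)
  then show ?thesis by (simp only: Height_def D_def H_def Psi_len)
qed

theorem theorem2p1:
  fixes n :: nat
  assumes "n \<ge> 1"
  shows "bij_betw (Psi_PF_Luk n) (PF_inc n) (Luk n)
    \<and> (\<forall>p\<in>PF_inc n.
          real (sum_list (disp p)) = Area (Psi_PF_Luk n p)
        \<and> int (Max (set (disp p))) = Height (Psi_PF_Luk n p))"
proof (intro conjI ballI)
  show "bij_betw (Psi_PF_Luk n) (PF_inc n) (Luk n)"
    unfolding bij_betw_def using Psi_inj into_Luk Psi_surj by blast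
qed (use area_eq height_eq assms in auto)

end
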